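(* Let $d\in\mathbb{N}^\star$, $0<\alpha\le\beta<\infty$, $\mathcal{M}$ the set of symmetric matrices $A\in\mathbb{R}^{d\times d}$ with $\alpha|\xi|^2\le\xi^TA\xi\le\beta|\xi|^2$ for all $\xi$, and $B$ the open unit ball of $\mathbb{R}^d$ with characteristic function $\chi_B$. Let $(p_i)_{1\le i\le d}$ be a basis of $\mathbb{R}^d$ and $A_1,A_2\in\mathcal{M}$ constant matrices such that for every $1\le i\le d$, $$-\operatorname{div}\Big(\big(A_1\chi_B+A_2(1-\chi_B)\big)p_i\Big)=0\ \text{ in }\mathcal{D}'(\mathbb{R}^d).$$ Then $A_1=A_2$. *)

theory Defs
  imports "HOL-Analysis.Analysis"
begin

fun Ck :: "nat \<Rightarrow> ('a::euclidean_space \<Rightarrow> real) \<Rightarrow> bool" where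
  "Ck 0 f = continuous_on UNIV f"
| "Ck (Suc k) f = (f differentiable_on UNIV \<and>
      (\<forall>v. Ck k (\<lambda>x. frechet_derivative f (at x) v)))"

definition smooth_fun :: "('a::euclidean_space \<Rightarrow> real) \<Rightarrow> bool" where
  "smooth_fun f \<longleftrightarrow> (\<forall>k. Ck k f)"

definition test_fun :: "('a::euclidean_space \<Rightarrow> real) \<Rightarrow> bool" where
  "test_fun \<phi> \<longleftrightarrow> smooth_fun \<phi> \<and> compact (closure {x. \<phi> x \<noteq> 0})"

definition ellip :: "real \<Rightarrow> real \<Rightarrow> (real^'n^'n) set" where
  "ellip \<alpha> \<beta> = {A. transpose A = A \<and>
     (\<forall>\<xi>. \<alpha> * (norm \<xi>)\<^sup>2 \<le> \<xi> \<bullet> (A *v \<xi>) \<and> \<xi> \<bullet> (A *v \<xi>) \<le> \<beta> * (norm \<xi>)\<^sup>2)}"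

text \<open>-div F = 0 in D'(R^d): for all test functions phi, the integral of F . grad phi vanishes.\<close>
definition div_free_distr :: "(real^'n \<Rightarrow> real^'n) \<Rightarrow> bool" where
  "div_free_distr F \<longleftrightarrow> (\<forall>\<phi>. test_fun \<phi> \<longrightarrow>
     integral UNIV (\<lambda>x. frechet_derivative \<phi> (at x) (F x)) = 0)"

end

theory Submission
  imports Defs
begin


definition E :: "nat \<Rightarrow> real \<Rightarrow> real" where
  "E m t = (if t > 0 then exp (- 1 / t) / t ^ m else 0)"

lemma E_nonneg: "E m t \<ge> 0" by (simp add: E_def)
lemma E_pos: "t > 0 \<Longrightarrow> E m t > 0" by (simp add: E_def)

lemma E_lim0: "((\<lambda>t. exp (- 1 / t) / t ^ k) \<longlongrightarrow> 0) (at_right (0::real))"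
proof -
  have "((\<lambda>s. s ^ k / exp s) \<longlongrightarrow> (0::real)) at_top" by (rule tendsto_power_div_exp_0)
  then have "((\<lambda>t. (inverse t) ^ k / exp (inverse t)) \<longlongrightarrow> (0::real)) (at_right 0)"
    using filterlim_compose filterlim_inverse_at_top_right by blast
  moreover have "\<forall>\<^sub>F t in at_right (0::real). (inverse t) ^ k / exp (inverse t) = exp (- 1 / t) / t ^ k"
    apply (rule eventually_mono[OF eventually_at_right_less]) by (simp add: exp_minus field_simps power_inverse)
  ultimately show ?thesis by (rule Lim_transform_eventually)
qed

lemma E_deriv: "(E m has_real_derivative (E (m+2) t - real m * E (m+1) t)) (at t)"
proof (cases "t > 0")
  case True
  have d: "((\<lambda>t. exp (- 1 / t) / t ^ m) has_real_derivative
     (exp (- 1 / t) * (1 / t^2) / t ^ m - exp (- 1 / t) * (real m * t ^ (m - 1)) / (t ^ m)^2)) (at t)"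
    using True by (auto intro!: derivative_eq_intros simp: power2_eq_square diff_divide_distrib)
  have eq: "exp (- 1 / t) * (1 / t^2) / t ^ m - exp (- 1 / t) * (real m * t ^ (m - 1)) / (t ^ m)^2
     = E (m+2) t - real m * E (m+1) t"
  proof (cases m)
    case 0 then show ?thesis using True by (simp add: E_def power2_eq_square)
  next
    case (Suc k)
    have "exp (- 1 / t) * (real m * t ^ (m - 1)) / (t ^ m)^2 = real m * (exp (- 1 / t) / t ^ (m+1))"
      using True Suc by (simp add: field_simps power2_eq_square power_add)
    moreover have "exp (- 1 / t) * (1 / t^2) / t ^ m = exp (- 1 / t) / t ^ (m+2)"
      using True by (simp add: field_simps power2_eq_square power_add)
    ultimately show ?thesis using True by (simp add: E_def)
  qed
  have "((\<lambda>t. exp (- 1 / t) / t ^ m) has_real_derivative (E (m+2) t - real m * E (m+1) t)) (at t)"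
    using d eq by simp
  then show ?thesis
    apply (rule has_field_derivative_transform_within_open[where S="{0<..}"])
    using True by (auto simp: E_def)
next
  case False
  show ?thesis
  proof (cases "t < 0")
    case True
    have "((\<lambda>_. 0) has_real_derivative 0) (at t)" by simp
    then have "(E m has_real_derivative 0) (at t)"
      apply (rule has_field_derivative_transform_within_open[where S="{..<0}"])
      using True by (auto simp: E_def)
    moreover have "E (m+2) t - real m * E (m+1) t = 0" using True by (simp add: E_def)
    ultimately show ?thesis by simp
  next
    case False
    with \<open>\<not> t > 0\<close> have t: "t = 0" by simp
    have "((\<lambda>y. (E m y - E m 0) / (y - 0)) \<longlongrightarrow> 0) (at 0)"
    proof (rule filterlim_split_at_real)
      show "((\<lambda>y. (E m y - E m 0) / (y - 0)) \<longlongrightarrow> 0) (at_left 0)"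
        apply (rule tendsto_eventually)
        using eventually_at_left_real[of "-1::real" 0, OF neg_less_0_iff_less[THEN iffD2, OF zero_less_one]]
        by (rule eventually_mono) (auto simp: E_def)
      have "((\<lambda>t. exp (- 1 / t) / t ^ (m+1)) \<longlongrightarrow> 0) (at_right (0::real))" by (rule E_lim0)
      moreover have "\<forall>\<^sub>F y in at_right 0. exp (- 1 / y) / y ^ (m+1) = (E m y - E m 0) / (y - 0)"
        by (rule eventually_mono[OF eventually_at_right_less]) (auto simp: E_def)
      ultimately show "((\<lambda>y. (E m y - E m 0) / (y - 0)) \<longlongrightarrow> 0) (at_right 0)"
        by (rule Lim_transform_eventually)
    qed
    then show ?thesis using t by (simp add: has_field_derivative_iff E_def)
  qed
qed



inductive_set SM :: "(real^'n \<Rightarrow> real) set" where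
  SM_const: "(\<lambda>x. c) \<in> SM"
| SM_lin: "(\<lambda>x. x \<bullet> a) \<in> SM"
| SM_sq: "(\<lambda>x. x \<bullet> x) \<in> SM"
| SM_add: "f \<in> SM \<Longrightarrow> g \<in> SM \<Longrightarrow> (\<lambda>x. f x + g x) \<in> SM"
| SM_mult: "f \<in> SM \<Longrightarrow> g \<in> SM \<Longrightarrow> (\<lambda>x. f x * g x) \<in> SM"
| SM_E: "f \<in> SM \<Longrightarrow> (\<lambda>x. E m (f x)) \<in> SM"
| SM_inv: "f \<in> SM \<Longrightarrow> (\<forall>x. f x > 0) \<Longrightarrow> (\<lambda>x. inverse (f x)) \<in> SM"

lemma SM_deriv:
  assumes "f \<in> SM"
  shows "\<exists>D. (\<forall>x. (f has_derivative D x) (at x)) \<and> (\<forall>v. (\<lambda>x. D x v) \<in> SM)"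
  using assms
proof induction
  case (SM_const c)
  show ?case by (rule exI[of _ "\<lambda>x v. 0"]) (auto intro: SM.intros)
next
  case (SM_lin a)
  show ?case by (rule exI[of _ "\<lambda>x v. v \<bullet> a"]) (auto intro!: SM.intros derivative_eq_intros)
next
  case SM_sq
  show ?case
  proof (rule exI[of _ "\<lambda>x v. x \<bullet> (2 *\<^sub>R v)"], intro conjI allI)
    fix x :: "real^'a"
    show "((\<lambda>x. x \<bullet> x) has_derivative (\<lambda>v. x \<bullet> (2 *\<^sub>R v))) (at x)"
      by (auto intro!: derivative_eq_intros simp: inner_commute algebra_simps)
  qed (auto intro: SM.intros)
next
  case (SM_add f g)
  then obtain Df Dg where f: "\<forall>x. (f has_derivative Df x) (at x)" "\<forall>v. (\<lambda>x. Df x v) \<in> SM"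
    and g: "\<forall>x. (g has_derivative Dg x) (at x)" "\<forall>v. (\<lambda>x. Dg x v) \<in> SM" by blast
  show ?case
    by (rule exI[of _ "\<lambda>x v. Df x v + Dg x v"]) (auto intro!: SM.intros derivative_eq_intros f[rule_format] g[rule_format])
next
  case (SM_mult f g)
  then obtain Df Dg where f: "\<forall>x. (f has_derivative Df x) (at x)" "\<forall>v. (\<lambda>x. Df x v) \<in> SM"
    and g: "\<forall>x. (g has_derivative Dg x) (at x)" "\<forall>v. (\<lambda>x. Dg x v) \<in> SM" by blast
  show ?case
    by (rule exI[of _ "\<lambda>x v. f x * Dg x v + Df x v * g x"])
      (auto intro!: SM.intros derivative_eq_intros f[rule_format] g[rule_format] SM_mult.hyps)
next
  case (SM_E f m)
  then obtain Df where f: "\<forall>x. (f has_derivative Df x) (at x)" "\<forall>v. (\<lambda>x. Df x v) \<in> SM" by blast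
  show ?case
  proof (rule exI[of _ "\<lambda>x v. E (m+2) (f x) * Df x v + (- real m) * (E (m+1) (f x) * Df x v)"], intro conjI allI)
    fix x
    have "((\<lambda>x. E m (f x)) has_derivative (\<lambda>v. (E (m+2) (f x) - real m * E (m+1) (f x)) * Df x v)) (at x)"
      using has_derivative_compose[OF f(1)[rule_format, of x] E_deriv[of m "f x", unfolded has_field_derivative_def]]
      by (simp add: o_def mult.commute)
    then show "((\<lambda>x. E m (f x)) has_derivative (\<lambda>v. E (m+2) (f x) * Df x v + (- real m) * (E (m+1) (f x) * Df x v))) (at x)"
      by (simp add: algebra_simps)
  next
    fix v
    show "(\<lambda>x. E (m+2) (f x) * Df x v + (- real m) * (E (m+1) (f x) * Df x v)) \<in> SM"
      using f SM_E.hyps by (intro SM_add SM_mult SM_E SM_const) (auto intro: SM.intros)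
  qed
next
  case (SM_inv f)
  then obtain Df where f: "\<forall>x. (f has_derivative Df x) (at x)" "\<forall>v. (\<lambda>x. Df x v) \<in> SM" by blast
  show ?case
  proof (rule exI[of _ "\<lambda>x v. (-1) * (inverse (f x) * (inverse (f x) * Df x v))"], intro conjI allI)
    fix x
    have "f x \<noteq> 0" using SM_inv.hyps(2) by (metis less_irrefl)
    then show "((\<lambda>x. inverse (f x)) has_derivative (\<lambda>v. (-1) * (inverse (f x) * (inverse (f x) * Df x v)))) (at x)"
      using f(1) by (auto intro!: derivative_eq_intros simp: algebra_simps)
  next
    fix v
    show "(\<lambda>x. (-1) * (inverse (f x) * (inverse (f x) * Df x v))) \<in> SM"
      using f SM_inv.hyps by (intro SM_add SM_mult SM_inv SM_const) (auto intro: SM.intros)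
  qed
qed

lemma SM_Ck: "f \<in> SM \<Longrightarrow> Ck k f"
proof (induction k arbitrary: f)
  case 0
  then obtain D where "\<forall>x. (f has_derivative D x) (at x)" using SM_deriv by blast
  then show ?case
    by (metis differentiable_def differentiable_imp_continuous_on differentiable_on_def Ck.simps(1))
next
  case (Suc k)
  then obtain D where D: "\<forall>x. (f has_derivative D x) (at x)" "\<forall>v. (\<lambda>x. D x v) \<in> SM" using SM_deriv by blast
  have fd: "frechet_derivative f (at x) = D x" for x using D(1) frechet_derivative_at by metis
  show ?case
    using D by (auto simp: fd differentiable_on_def differentiable_def intro!: Suc.IH)
qed

lemma SM_smooth: "f \<in> SM \<Longrightarrow> smooth_fun f"
  by (simp add: smooth_fun_def SM_Ck)



definition rho :: "real \<Rightarrow> real" where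
  "rho s = E 0 (4 - s) * inverse (E 0 (4 - s) + E 0 (s - 1))"

definition psi :: "real^'n \<Rightarrow> real \<Rightarrow> real^'n \<Rightarrow> real" where
  "psi w l x = (x \<bullet> w) * rho ((x \<bullet> x) / l^2)"

lemma rho_den_pos: "E 0 (4 - s) + E 0 (s - 1) > 0"
proof (cases "s < 4")
  case True then show ?thesis using E_pos[of "4 - s" 0] E_nonneg[of 0 "s - 1"] by simp
next
  case False then show ?thesis using E_pos[of "s - 1" 0] E_nonneg[of 0 "4 - s"] by simp
qed

lemma rho_one: "s \<le> 1 \<Longrightarrow> rho s = 1"
  using E_pos[of "4 - s" 0] by (simp add: rho_def E_def[of 0 "s - 1"])

lemma rho_zero: "s \<ge> 4 \<Longrightarrow> rho s = 0"
  by (simp add: rho_def E_def[of 0 "4 - s"])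

lemma SM_rho: "(\<lambda>x::real^'n. rho (a * (x \<bullet> x))) \<in> SM"
proof -
  have q1: "(\<lambda>x::real^'n. 4 + (- a) * (x \<bullet> x)) \<in> SM" by (intro SM.intros)
  have q2: "(\<lambda>x::real^'n. (-1) + a * (x \<bullet> x)) \<in> SM" by (intro SM.intros)
  have "(\<lambda>x::real^'n. E 0 (4 + (- a) * (x \<bullet> x)) * inverse (E 0 (4 + (- a) * (x \<bullet> x)) + E 0 ((-1) + a * (x \<bullet> x)))) \<in> SM"
    apply (rule SM_mult[OF SM_E[OF q1] SM_inv[OF SM_add[OF SM_E[OF q1] SM_E[OF q2]]]])
    using rho_den_pos by (simp add: algebra_simps)
  moreover have "(\<lambda>x::real^'n. E 0 (4 + (- a) * (x \<bullet> x)) * inverse (E 0 (4 + (- a) * (x \<bullet> x)) + E 0 ((-1) + a * (x \<bullet> x))))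
     = (\<lambda>x. rho (a * (x \<bullet> x)))"
    by (simp add: rho_def algebra_simps)
  ultimately show ?thesis by simp
qed

lemma SM_psi: "psi w l \<in> SM"
proof -
  have "(\<lambda>x. (x \<bullet> w) * rho ((1 / l^2) * (x \<bullet> x))) \<in> SM"
    by (intro SM_mult SM_lin SM_rho)
  moreover have "(\<lambda>x. (x \<bullet> w) * rho ((1 / l^2) * (x \<bullet> x))) = psi w l"
    by (auto simp: psi_def)
  ultimately show ?thesis by simp
qed

lemma psi_supp: "psi w l x \<noteq> 0 \<Longrightarrow> l > 0 \<Longrightarrow> norm x \<le> 2 * l"
proof (rule ccontr)
  assume a: "psi w l x \<noteq> 0" "l > 0" "\<not> norm x \<le> 2 * l"
  then have "(2*l)^2 \<le> (norm x)^2" by (intro power_mono) auto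
  then have "4 * l^2 \<le> x \<bullet> x" by (simp add: power2_norm_eq_inner power_mult_distrib)
  then have "(x \<bullet> x) / l^2 \<ge> 4" using a(2) by (simp add: field_simps)
  then show False using a(1) by (simp add: psi_def rho_zero)
qed

lemma psi_inner: "norm x < l \<Longrightarrow> psi w l x = x \<bullet> w"
proof -
  assume a: "norm x < l"
  then have "(norm x)^2 \<le> l^2" by (intro power_mono) auto
  then have "x \<bullet> x \<le> l^2" by (simp add: power2_norm_eq_inner)
  moreover have "l > 0" using a norm_ge_zero[of x] by linarith
  then have "l^2 > 0" by simp
  ultimately have "(x \<bullet> x) / l^2 \<le> 1" by (simp add: field_simps)
  then show ?thesis by (simp add: psi_def rho_one)
qed

lemma psi_scale: "l > 0 \<Longrightarrow> psi w l x = l * psi w 1 ((1 / l) *\<^sub>R x)"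
  by (simp add: psi_def field_simps power2_eq_square)

lemma test_psi: "l > 0 \<Longrightarrow> test_fun (psi w l)"
proof -
  assume l: "l > 0"
  have "{x. psi w l x \<noteq> 0} \<subseteq> cball 0 (2 * l)" using psi_supp[OF _ l] by auto
  then have "bounded {x. psi w l x \<noteq> 0}" using bounded_cball bounded_subset by blast
  then show ?thesis by (simp add: test_fun_def SM_smooth SM_psi)
qed



lemma cbox_scale_mem:
  fixes x a :: "real^'n"
  assumes "m > 0" "m *\<^sub>R x \<in> cbox (-a) a"
  shows "x \<in> cbox ((- a - 0) /\<^sub>R m) ((a - 0) /\<^sub>R m)"
  unfolding mem_box
proof (intro ballI conjI)
  fix i :: "real^'n" assume i: "i \<in> Basis"
  have h: "- (a \<bullet> i) \<le> m * (x \<bullet> i)" "m * (x \<bullet> i) \<le> a \<bullet> i"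
    using assms(2) i unfolding mem_box by (auto simp: inner_diff_left)
  show "((- a - 0) /\<^sub>R m) \<bullet> i \<le> x \<bullet> i" "x \<bullet> i \<le> ((a - 0) /\<^sub>R m) \<bullet> i"
    using h assms(1) by (auto simp: field_simps)
qed

lemma key:
  fixes u w :: "real^'n"
  assumes H: "\<And>\<phi>. test_fun \<phi> \<Longrightarrow>
     integral UNIV (\<lambda>x. frechet_derivative \<phi> (at x) (u + (if x \<in> ball 0 1 then w else 0))) = 0"
  shows "w = 0"
proof -
  obtain D where D: "\<And>x. (psi w 1 has_derivative D x) (at x)" "\<And>v. (\<lambda>x. D x v) \<in> SM"
    using SM_deriv[OF SM_psi[of w 1]] by blast
  have lin: "linear (D x)" for x using D(1) has_derivative_linear by blast
  have fd: "frechet_derivative (psi w l) (at x) = (\<lambda>v. D ((1/l) *\<^sub>R x) v)" if l: "l > 0" for l x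
  proof -
    have eqf: "psi w l = (\<lambda>x. l * psi w 1 ((1 / l) *\<^sub>R x))" using psi_scale[OF l] by auto
    have "((\<lambda>x. (1 / l) *\<^sub>R x) has_derivative (\<lambda>v. (1 / l) *\<^sub>R v)) (at x)"
      by (auto intro!: derivative_eq_intros)
    from has_derivative_compose[OF this D(1)]
    have "((\<lambda>x. psi w 1 ((1 / l) *\<^sub>R x)) has_derivative (\<lambda>v. D ((1 / l) *\<^sub>R x) ((1 / l) *\<^sub>R v))) (at x)"
      by (simp add: o_def)
    then have "((\<lambda>x. l * psi w 1 ((1 / l) *\<^sub>R x)) has_derivative (\<lambda>v. l * D ((1 / l) *\<^sub>R x) ((1 / l) *\<^sub>R v))) (at x)"
      by (rule has_derivative_mult_right)
    moreover have "(\<lambda>v. l * D ((1 / l) *\<^sub>R x) ((1 / l) *\<^sub>R v)) = (\<lambda>v. D ((1/l) *\<^sub>R x) v)"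
      using l by (simp add: linear_scale[OF lin])
    ultimately show ?thesis using eqf frechet_derivative_at by metis
  qed
  have Din: "D y w = w \<bullet> w" if "norm y < 1" for y
  proof -
    have "((\<lambda>y. y \<bullet> w) has_derivative (\<lambda>v. v \<bullet> w)) (at y)" by (auto intro!: derivative_eq_intros)
    then have "(psi w 1 has_derivative (\<lambda>v. v \<bullet> w)) (at y)"
      apply (rule has_derivative_transform_within_open[where s="ball 0 1"])
      using that psi_inner[of _ 1 w] by auto
    then have "D y = (\<lambda>v. v \<bullet> w)" using D(1) has_derivative_unique by blast
    then show ?thesis by simp
  qed
  have Dout: "D y u = 0" if "norm y > 2" for y
  proof -
    have "((\<lambda>y. 0) has_derivative (\<lambda>v. 0)) (at y)" by simp
    then have "(psi w 1 has_derivative (\<lambda>v. 0)) (at y)"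
      apply (rule has_derivative_transform_within_open[where s="- cball 0 2"])
      using that psi_supp[of w 1] by (auto simp: dist_norm)
    then have "D y = (\<lambda>v. 0)" using D(1) has_derivative_unique by blast
    then show ?thesis by simp
  qed
  define g where "g y = D y u" for y
  have gc: "continuous_on UNIV g"
    using SM_Ck[OF D(2)[of u], of 0] by (simp add: g_def)
  obtain a where a: "cball (0::real^'n) 2 \<subseteq> cbox (-a) a"
    using bounded_subset_cbox_symmetric[OF bounded_cball] by blast
  have gi: "g integrable_on cbox (-a) a"
    using gc by (auto intro: integrable_continuous continuous_on_subset)
  define I where "I = integral (cbox (-a) a) g"
  have gI: "(g has_integral I) (cbox (-a) a)" using gi I_def by (simp add: integrable_integral)
  have gl: "((\<lambda>x. g ((1/l) *\<^sub>R x)) has_integral (l ^ DIM(real^'n) * I)) UNIV" if l: "l > 0" for l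
  proof -
    have "((\<lambda>x. g ((1/l) *\<^sub>R x + 0)) has_integral (I /\<^sub>R (1/l) ^ DIM(real^'n)))
        (cbox ((- a - 0) /\<^sub>R (1/l)) ((a - 0) /\<^sub>R (1/l)))"
      by (rule has_integral_affinity'[OF gI]) (use l in simp)
    then have "((\<lambda>x. g ((1/l) *\<^sub>R x)) has_integral (l ^ DIM(real^'n) * I))
        (cbox ((- a - 0) /\<^sub>R (1/l)) ((a - 0) /\<^sub>R (1/l)))"
      by (simp add: power_one_over)
    then show ?thesis
    proof (rule has_integral_on_superset)
      fix x assume x: "x \<notin> cbox ((- a - 0) /\<^sub>R (1/l)) ((a - 0) /\<^sub>R (1/l))"
      show "g ((1/l) *\<^sub>R x) = 0"
      proof (rule ccontr)
        assume "g ((1/l) *\<^sub>R x) \<noteq> 0"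
        then have "norm ((1/l) *\<^sub>R x) \<le> 2" using Dout g_def by force
        then have "(1/l) *\<^sub>R x \<in> cbox (-a) a" using a by auto
        then show False using x cbox_scale_mem[of "1/l" x a] l by simp
      qed
    qed simp
  qed
  define \<mu> where "\<mu> = measure lebesgue (ball (0::real^'n) 1)"
  have \<mu>pos: "\<mu> > 0"
    using content_ball_pos[of 1 "0::real^'n"] by (simp add: \<mu>_def)
  have ind: "((\<lambda>x. (w \<bullet> w) * indicator (ball (0::real^'n) 1) x) has_integral ((w \<bullet> w) * \<mu>)) UNIV"
  proof -
    have "(indicator (ball (0::real^'n) 1) has_integral \<mu>) UNIV"
      using lmeasurable_iff_has_integral \<mu>_def lmeasurable_ball by blast
    from has_integral_mult_right[OF this, of "w \<bullet> w"]
    show ?thesis by simp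
  qed
  have eq: "l ^ DIM(real^'n) * I + (w \<bullet> w) * \<mu> = 0" if l: "l \<ge> 1" for l
  proof -
    have lp: "l > 0" using l by simp
    have hi0: "((\<lambda>x. g ((1/l) *\<^sub>R x) + ((w \<bullet> w) * indicator (ball (0::real^'n) 1) x)) has_integral
        (l ^ DIM(real^'n) * I + (w \<bullet> w) * \<mu>)) UNIV"
      by (rule has_integral_add[OF gl[OF lp] ind])
    moreover have feq: "(\<lambda>x. frechet_derivative (psi w l) (at x) (u + (if x \<in> ball 0 1 then w else 0)))
       = (\<lambda>x. g ((1/l) *\<^sub>R x) + ((w \<bullet> w) * indicator (ball (0::real^'n) 1) x))"
    proof
      fix x :: "real^'n"
      show "frechet_derivative (psi w l) (at x) (u + (if x \<in> ball 0 1 then w else 0))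
         = g ((1/l) *\<^sub>R x) + ((w \<bullet> w) * indicator (ball (0::real^'n) 1) x)"
      proof (cases "x \<in> ball 0 1")
        case True
        have "norm ((1/l) *\<^sub>R x) < 1"
          using True l by (simp add: divide_less_eq) 
        then show ?thesis
          using True by (simp add: fd[OF lp] g_def linear_add[OF lin] Din)
      next
        case False
        then show ?thesis by (simp add: fd[OF lp] g_def)
      qed
    qed
    have hi: "((\<lambda>x. frechet_derivative (psi w l) (at x) (u + (if x \<in> ball 0 1 then w else 0))) has_integral
        (l ^ DIM(real^'n) * I + (w \<bullet> w) * \<mu>)) UNIV"
      unfolding feq by (rule hi0)
    show ?thesis using H[OF test_psi[OF lp]] integral_unique[OF hi] by simp
  qed
  have e1: "I + (w \<bullet> w) * \<mu> = 0" using eq[of 1] by simp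
  have e2: "2 ^ DIM(real^'n) * I + (w \<bullet> w) * \<mu> = 0" using eq[of 2] by simp
  have "(2 ^ DIM(real^'n) - 1) * I = (2 ^ DIM(real^'n) * I + (w \<bullet> w) * \<mu>) - (I + (w \<bullet> w) * \<mu>)"
    by (simp add: algebra_simps)
  also have "\<dots> = 0" by (simp only: e1 e2)
  finally have "(2 ^ DIM(real^'n) - 1) * I = 0" .
  moreover have "(2::real) ^ DIM(real^'n) > 1" using DIM_positive by (intro one_less_power) auto
  then have "(2::real) ^ DIM(real^'n) - 1 \<noteq> 0" by linarith
  ultimately have "I = 0" by (simp only: mult_eq_0_iff) blast
  then have "(w \<bullet> w) * \<mu> = 0" using e1 by simp
  then show "w = 0" using \<mu>pos by simp
qed



theorem lemma4p4:
  fixes \<alpha> \<beta> :: real and A1 A2 :: "real^'n^'n" and p :: "'n \<Rightarrow> real^'n"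
  assumes "0 < \<alpha>" "\<alpha> \<le> \<beta>"
    and "A1 \<in> ellip \<alpha> \<beta>" "A2 \<in> ellip \<alpha> \<beta>"
    and "inj p" "independent (range p)" "span (range p) = UNIV"
    and "\<And>i. div_free_distr
           (\<lambda>x. (if x \<in> ball 0 1 then A1 else A2) *v p i)"
  shows "A1 = A2"
proof -
  have z: "(A1 - A2) *v p i = 0" for i
  proof (rule key[where u = "A2 *v p i"])
    fix \<phi> :: "real^'n \<Rightarrow> real" assume t: "test_fun \<phi>"
    have eq: "(\<lambda>x. (if x \<in> ball 0 1 then A1 else A2) *v p i)
        = (\<lambda>x. A2 *v p i + (if x \<in> ball 0 1 then (A1 - A2) *v p i else 0))"
      by (auto simp: matrix_vector_mult_diff_rdistrib)
    have "div_free_distr (\<lambda>x. A2 *v p i + (if x \<in> ball 0 1 then (A1 - A2) *v p i else 0))"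
      by (subst eq[symmetric]) (rule assms(8))
    then show "integral UNIV (\<lambda>x. frechet_derivative \<phi> (at x)
        (A2 *v p i + (if x \<in> ball 0 1 then (A1 - A2) *v p i else 0))) = 0"
      using t unfolding div_free_distr_def by blast
  qed
  have "(A1 - A2) *v x = 0" for x
    using linear_eq_0_on_span[OF matrix_vector_mul_linear[of "A1 - A2"], of "range p" x] z assms(7) by auto
  then have "A1 - A2 = 0" using matrix_eq[of "A1 - A2" 0] by simp
  then show ?thesis by simp
qed

end
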